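(* Let $G$ be a simple connected graph with $n$ vertices and $m$ edges, let $k>2$ and $r\ge1$ be integers, and let $S_k^r(G)$ be the $r$-th iterated $k$-parallel subdivision graph of $G$. Then $$Kf^*(S_k^r(G))=(8k)^rKf^*(G)+\frac{(2k)^r(4^r-1)}{3}(m-2mn)+\frac{k(4k)^r(k^r-2^r)}{k-2}m^2-\frac{k(2k)^r\big[4^r-2k(4^r-1)+3(2k)^r-4\big]}{3(k-2)(2k-1)}m^2.$$
   Context: The $k$-parallel subdivision graph $S_k(H)$ of a graph $H$ is obtained by replacing each edge $uv$ of $H$ by $k$ internally disjoint paths $u-w-v$ of length $2$ (each with its own new middle vertex). Iterates: $S_k^0(G)=G$ and $S_k^r(G)=S_k(S_k^{r-1}(G))$. For a connected graph $H$, the multiplicative degree Kirchhoff index is $Kf^*(H)=\sum_{\{a,b\}\subseteq V(H)} d_a d_b\,\Omega_{ab}(H)$, where the sum is over unordered pairs of distinct vertices, $d_a$ is the degree of $a$, and $\Omega_{ab}(H)$ is the resistance distance (effective resistance with unit resistors on the edges); equivalently $Kf^*(H)=2|E(H)|\sum_{i\ge2}1/\lambda_i$ where $0=\lambda_1<\lambda_2\le\dots$ are the eigenvalues of the normalized Laplacian $I-D^{-1/2}AD^{-1/2}$ of $H$. *)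

theory Defs
  imports Complex_Main "HOL-Library.Product_Lexorder"
begin

text \<open>A finite simple graph is represented as a pair (n, E): the vertex set is
  {0..<n} and every edge {u,v} is stored exactly once as the pair (u,v) with u < v.\<close>

type_synonym graph = "nat \<times> (nat \<times> nat) set"

definition simple_graph :: "graph \<Rightarrow> bool" where
  "simple_graph G \<longleftrightarrow> (\<forall>(u,v)\<in>snd G. u < v \<and> v < fst G)"

definition adj :: "graph \<Rightarrow> nat \<Rightarrow> nat \<Rightarrow> bool" where
  "adj G i j \<longleftrightarrow> (i, j) \<in> snd G \<or> (j, i) \<in> snd G"

definition nbrs :: "graph \<Rightarrow> nat \<Rightarrow> nat set" where
  "nbrs G i = {j. j < fst G \<and> adj G i j}"

definition deg :: "graph \<Rightarrow> nat \<Rightarrow> nat" where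
  "deg G i = card (nbrs G i)"

definition num_edges :: "graph \<Rightarrow> nat" where
  "num_edges G = card (snd G)"

definition connected_graph :: "graph \<Rightarrow> bool" where
  "connected_graph G \<longleftrightarrow> 0 < fst G \<and> (\<forall>a < fst G. \<forall>b < fst G. (adj G)\<^sup>*\<^sup>* a b)"

definition lap_apply :: "graph \<Rightarrow> (nat \<Rightarrow> real) \<Rightarrow> nat \<Rightarrow> real" where
  "lap_apply G x i = real (deg G i) * x i - (\<Sum>j\<in>nbrs G i. x j)"

text \<open>Resistance distance (unit resistors): the potential difference x_a - x_b when a
  unit current enters at a and leaves at b, i.e. L x = e_a - e_b.\<close>
definition resistance :: "graph \<Rightarrow> nat \<Rightarrow> nat \<Rightarrow> real" where
  "resistance G a b = (THE \<omega>. \<exists>x. (\<forall>i < fst G. lap_apply G x i =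
       (if i = a then 1 else 0) - (if i = b then 1 else 0)) \<and> \<omega> = x a - x b)"

definition kf_star :: "graph \<Rightarrow> real" where
  "kf_star G = (\<Sum>a < fst G. \<Sum>b \<in> {a<..<fst G}.
      real (deg G a) * real (deg G b) * resistance G a b)"

text \<open>k-parallel subdivision: the j-th edge (u,v) (in sorted order) is replaced by k paths
  u - w - v with fresh middle vertices w = n + j*k + c, c < k.\<close>
definition par_subdiv :: "nat \<Rightarrow> graph \<Rightarrow> graph" where
  "par_subdiv k G = (let n = fst G; es = sorted_list_of_set (snd G) in
     (n + k * length es,
      {(fst (es ! j), n + j * k + c) | j c. j < length es \<and> c < k} \<union>
      {(snd (es ! j), n + j * k + c) | j c. j < length es \<and> c < k}))"

end

theory Submission
  imports Defs "Jordan_Normal_Form.Determinant"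
begin
lemma tri_sum:
  fixes F :: "nat \<Rightarrow> nat \<Rightarrow> real"
  assumes sym: "\<And>a b. F a b = F b a" and dg: "\<And>a. F a a = 0"
  shows "(\<Sum>a<n. \<Sum>b\<in>{a<..<n}. F a b) = (\<Sum>a<n. \<Sum>b<n. F a b) / 2"
proof (induction n)
  case 0 then show ?case by simp
next
  case (Suc n)
  have e: "\<And>a. a < n \<Longrightarrow> {a<..<Suc n} = insert n {a<..<n}" by auto
  have e2: "{n<..<Suc n} = {}" by auto
  have "(\<Sum>a<Suc n. \<Sum>b\<in>{a<..<Suc n}. F a b) = (\<Sum>a<n. \<Sum>b\<in>{a<..<Suc n}. F a b)"
    by (simp add: e2)
  also have "\<dots> = (\<Sum>a<n. (\<Sum>b\<in>{a<..<n}. F a b) + F a n)"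
    by (rule sum.cong) (auto simp: e add.commute)
  also have "\<dots> = (\<Sum>a<n. \<Sum>b\<in>{a<..<n}. F a b) + (\<Sum>a<n. F a n)"
    by (simp add: sum.distrib)
  finally have L: "(\<Sum>a<Suc n. \<Sum>b\<in>{a<..<Suc n}. F a b) = (\<Sum>a<n. \<Sum>b\<in>{a<..<n}. F a b) + (\<Sum>a<n. F a n)" .
  have R: "(\<Sum>a<Suc n. \<Sum>b<Suc n. F a b) = (\<Sum>a<n. \<Sum>b<n. F a b) + 2 * (\<Sum>a<n. F a n)"
    using sym dg by (simp add: sum.distrib)
  show ?case using L R Suc by simp
qed

locale sgraph =
  fixes n :: nat and E :: "(nat \<times> nat) set"
  assumes simp_g: "simple_graph (n, E)"
begin

lemma E_bound: "(u, v) \<in> E \<Longrightarrow> u < v \<and> v < n"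
  using simp_g unfolding simple_graph_def by auto

lemma finE: "finite E"
proof -
  have "E \<subseteq> {..<n} \<times> {..<n}" using E_bound by fastforce
  then show ?thesis by (rule finite_subset) auto
qed

definition es where "es = sorted_list_of_set E"
definition m where "m = length es"
definition ea where "ea j = fst (es ! j)"
definition eb where "eb j = snd (es ! j)"

lemma m_card: "m = card E"
  using finE by (simp add: m_def es_def)

lemma es_set: "set es = E" using finE by (simp add: es_def)
lemma es_dist: "distinct es" by (simp add: es_def)

lemma edge: "j < m \<Longrightarrow> (ea j, eb j) \<in> E"
  using es_set by (auto simp: ea_def eb_def m_def)

lemma ea_lt: "j < m \<Longrightarrow> ea j < eb j" using edge E_bound by blast
lemma eb_lt: "j < m \<Longrightarrow> eb j < n" using edge E_bound by blast
lemma ea_lt_n: "j < m \<Longrightarrow> ea j < n" using ea_lt eb_lt by fastforce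

lemma es_inj: "j1 < m \<Longrightarrow> j2 < m \<Longrightarrow> ea j1 = ea j2 \<Longrightarrow> eb j1 = eb j2 \<Longrightarrow> j1 = j2"
  using es_dist nth_eq_iff_index_eq unfolding ea_def eb_def m_def
  by (metis prod.expand)

lemma edge_ex: "(u, v) \<in> E \<Longrightarrow> \<exists>j<m. ea j = u \<and> eb j = v"
  using es_set unfolding ea_def eb_def m_def
  by (metis fst_conv in_set_conv_nth snd_conv)

lemma adj_iff: "adj (n, E) u v \<longleftrightarrow> (\<exists>j<m. (ea j = u \<and> eb j = v) \<or> (ea j = v \<and> eb j = u))"
  unfolding adj_def using edge by (auto dest!: edge_ex)

lemma adj_lt: "adj (n, E) u v \<Longrightarrow> u < n \<and> v < n"
  unfolding adj_def using E_bound by fastforce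

definition inc where "inc u = {j. j < m \<and> (ea j = u \<or> eb j = u)}"
definition oth where "oth u j = (if ea j = u then eb j else ea j)"

lemma fin_inc: "finite (inc u)" unfolding inc_def by auto

lemma nbrs_fin: "finite (nbrs (n, E) u)" unfolding nbrs_def by auto

lemma bij_oth: "bij_betw (oth u) (inc u) (nbrs (n, E) u)"
proof (rule bij_betw_imageI)
  show "inj_on (oth u) (inc u)"
  proof (rule inj_onI)
    fix x y assume x: "x \<in> inc u" and y: "y \<in> inc u" and e: "oth u x = oth u y"
    have lx: "ea x < eb x" "ea y < eb y" using x y ea_lt unfolding inc_def by auto
    have "ea x = ea y \<and> eb x = eb y" using x y e lx unfolding inc_def oth_def
      by (auto split: if_splits)
    then show "x = y" using x y es_inj unfolding inc_def by blast
  qed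
  show "oth u ` inc u = nbrs (n, E) u"
  proof
    show "oth u ` inc u \<subseteq> nbrs (n, E) u"
    proof
      fix v assume "v \<in> oth u ` inc u"
      then obtain j where j: "j \<in> inc u" "v = oth u j" by auto
      then have "adj (n, E) u v" unfolding adj_iff inc_def oth_def by auto
      then show "v \<in> nbrs (n, E) u" unfolding nbrs_def using adj_lt by auto
    qed
    show "nbrs (n, E) u \<subseteq> oth u ` inc u"
    proof
      fix v assume "v \<in> nbrs (n, E) u"
      then have "adj (n, E) u v" unfolding nbrs_def by auto
      then obtain j where j: "j < m" "(ea j = u \<and> eb j = v) \<or> (ea j = v \<and> eb j = u)"
        unfolding adj_iff by auto
      have "ea j < eb j" using j ea_lt by auto
      then have "j \<in> inc u" "v = oth u j" using j unfolding inc_def oth_def by auto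
      then show "v \<in> oth u ` inc u" by auto
    qed
  qed
qed

lemma nbr_sum: "(\<Sum>v\<in>nbrs (n, E) u. h v) = (\<Sum>j\<in>inc u. h (oth u j))"
  using sum.reindex_bij_betw[OF bij_oth, of h] by simp

lemma card_inc: "card (inc u) = deg (n, E) u"
  unfolding deg_def using bij_betw_same_card[OF bij_oth] by simp

lemma edge_sum:
  fixes F :: "nat \<Rightarrow> nat \<Rightarrow> real"
  shows "(\<Sum>u<n. \<Sum>v\<in>nbrs (n, E) u. F u v) = (\<Sum>j<m. F (ea j) (eb j) + F (eb j) (ea j))"
proof -
  have "(\<Sum>u<n. \<Sum>v\<in>nbrs (n, E) u. F u v) = (\<Sum>u<n. \<Sum>j\<in>inc u. F u (oth u j))"
    by (simp add: nbr_sum)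
  also have "\<dots> = (\<Sum>u<n. \<Sum>j<m. (if ea j = u then F u (eb j) else 0) + (if eb j = u then F u (ea j) else 0))"
  proof (rule sum.cong[OF refl])
    fix u
    have "inc u = {j \<in> {..<m}. ea j = u \<or> eb j = u}" unfolding inc_def by auto
    then have "(\<Sum>j\<in>inc u. F u (oth u j)) = (\<Sum>j<m. if ea j = u \<or> eb j = u then F u (oth u j) else 0)"
      using sum.inter_filter[of "{..<m}" "\<lambda>j. F u (oth u j)" "\<lambda>j. ea j = u \<or> eb j = u"] by simp
    also have "\<dots> = (\<Sum>j<m. (if ea j = u then F u (eb j) else 0) + (if eb j = u then F u (ea j) else 0))"
    proof (rule sum.cong[OF refl])
      fix j assume "j \<in> {..<m}"
      then have "ea j < eb j" using ea_lt by auto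
      then show "(if ea j = u \<or> eb j = u then F u (oth u j) else 0) =
        (if ea j = u then F u (eb j) else 0) + (if eb j = u then F u (ea j) else 0)"
        unfolding oth_def by auto
    qed
    finally show "(\<Sum>j\<in>inc u. F u (oth u j)) = (\<Sum>j<m. (if ea j = u then F u (eb j) else 0) + (if eb j = u then F u (ea j) else 0))" .
  qed
  also have "\<dots> = (\<Sum>j<m. \<Sum>u<n. (if ea j = u then F u (eb j) else 0) + (if eb j = u then F u (ea j) else 0))"
    by (rule sum.swap)
  also have "\<dots> = (\<Sum>j<m. F (ea j) (eb j) + F (eb j) (ea j))"
  proof (rule sum.cong[OF refl])
    fix j assume "j \<in> {..<m}"
    then have "ea j < n" "eb j < n" using ea_lt_n eb_lt by auto
    then show "(\<Sum>u<n. (if ea j = u then F u (eb j) else 0) + (if eb j = u then F u (ea j) else 0)) = F (ea j) (eb j) + F (eb j) (ea j)"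
      unfolding sum.distrib sum.delta'[OF finite_lessThan] by simp
  qed
  finally show ?thesis .
qed

lemma deg_sum: "(\<Sum>v\<in>nbrs (n, E) u. c) = real (deg (n, E) u) * c"
  by (simp add: deg_def)

lemma handshake: "(\<Sum>u<n. real (deg (n, E) u)) = 2 * real m"
  using edge_sum[of "\<lambda>u v. 1"] by (simp add: deg_def)

lemma lap_sum: "lap_apply (n, E) x u = (\<Sum>v\<in>nbrs (n, E) u. x u - x v)"
  unfolding lap_apply_def by (simp add: sum_subtractf deg_def)

lemma lap_total: "(\<Sum>u<n. lap_apply (n, E) x u) = 0"
  unfolding lap_sum edge_sum by simp

lemma lap_lin: "lap_apply (n, E) (\<lambda>i. c * x i + d * y i) u = c * lap_apply (n, E) x u + d * lap_apply (n, E) y u"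
  unfolding lap_sum sum_distrib_left sum.distrib[symmetric] by (rule sum.cong) (auto simp: algebra_simps)

lemma lap_diff: "lap_apply (n, E) (\<lambda>i. x i - y i) u = lap_apply (n, E) x u - lap_apply (n, E) y u"
  unfolding lap_sum sum_subtractf[symmetric] by (rule sum.cong) auto

end

locale cgraph = sgraph +
  assumes conn: "connected_graph (n, E)"
begin

lemma n_pos: "0 < n" using conn unfolding connected_graph_def by auto

lemma reach: "a < n \<Longrightarrow> b < n \<Longrightarrow> (adj (n, E))\<^sup>*\<^sup>* a b"
  using conn unfolding connected_graph_def by auto

lemma kernel:
  assumes h: "\<And>i. i < n \<Longrightarrow> lap_apply (n, E) x i = 0" and a: "a < n" and b: "b < n"
  shows "x a = x b"
proof -
  define M where "M = Max (x ` {..<n})"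
  have ne: "{..<n} \<noteq> {}" using n_pos by auto
  have le: "\<And>i. i < n \<Longrightarrow> x i \<le> M" unfolding M_def by auto
  have "M \<in> x ` {..<n}" unfolding M_def using ne by (intro Max_in) auto
  then obtain i0 where i0: "i0 < n" "x i0 = M" by auto
  have stp: "x j = M" if "i < n" "x i = M" "adj (n, E) i j" for i j
  proof -
    have jn: "j < n" using that adj_lt by auto
    have jN: "j \<in> nbrs (n, E) i" using that jn unfolding nbrs_def by auto
    have s0: "(\<Sum>v\<in>nbrs (n, E) i. x i - x v) = 0" using h[OF that(1)] lap_sum by simp
    have nn: "\<And>v. v \<in> nbrs (n, E) i \<Longrightarrow> 0 \<le> x i - x v"
      using le that(2) unfolding nbrs_def by auto
    have "\<forall>v\<in>nbrs (n, E) i. x i - x v = 0"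
      using iffD1[OF sum_nonneg_eq_0_iff[OF nbrs_fin nn] s0] by simp
    then show ?thesis using jN that(2) by auto
  qed
  have all: "x c = M" if "c < n" for c
  proof -
    have "(adj (n, E))\<^sup>*\<^sup>* i0 c" using reach i0 that by auto
    then have "c < n \<and> x c = M" 
    proof (induction rule: rtranclp_induct)
      case base then show ?case using i0 by auto
    next
      case (step y z)
      then have "y < n" "x y = M" by auto
      then show ?case using adj_lt[OF step(2)] stp[OF _ _ step(2)] by auto
    qed
    then show ?thesis by auto
  qed
  show ?thesis using all a b by auto
qed

lemma resistance_eq:
  assumes a: "a < n" and b: "b < n"
    and hx: "\<And>i. i < n \<Longrightarrow> lap_apply (n, E) x i = (if i = a then 1 else 0) - (if i = b then 1 else 0)"
  shows "resistance (n, E) a b = x a - x b"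
  unfolding resistance_def fst_conv
proof (rule the_equality)
  show "\<exists>xa. (\<forall>i<n. lap_apply (n, E) xa i = (if i = a then 1 else 0) - (if i = b then 1 else 0)) \<and> x a - x b = xa a - xa b"
    using hx by blast
  fix w assume "\<exists>y. (\<forall>i<n. lap_apply (n, E) y i = (if i = a then 1 else 0) - (if i = b then 1 else 0)) \<and> w = y a - y b"
  then obtain y where y: "\<forall>i<n. lap_apply (n, E) y i = (if i = a then 1 else 0) - (if i = b then 1 else 0)" and w: "w = y a - y b" by auto
  have "\<And>i. i < n \<Longrightarrow> lap_apply (n, E) (\<lambda>i. x i - y i) i = 0"
    using hx y by (simp add: lap_diff)
  then have "x a - y a = x b - y b" using kernel[of "\<lambda>i. x i - y i"] a b by blast
  then show "w = x a - x b" using w by simp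
qed

end

context cgraph begin

lemma exists_sol:
  fixes f :: "nat \<Rightarrow> real"
  assumes f0: "(\<Sum>i<n. f i) = 0"
  shows "\<exists>x. \<forall>i<n. lap_apply (n, E) x i = f i"
proof -
  define Mt :: "real mat" where "Mt = mat n n (\<lambda>(i,j). if i = 0 then (if j = 0 then 1 else 0)
      else (if i = j then real (deg (n,E) i) else 0) - (if adj (n,E) i j then 1 else 0))"
  have Mc: "Mt \<in> carrier_mat n n" by (simp add: Mt_def)
  have rowf: "(Mt *\<^sub>v v) $ i = (if i = 0 then v $ 0 else lap_apply (n,E) (\<lambda>j. if j < n then v $ j else 0) i)"
    if v: "v \<in> carrier_vec n" and i: "i < n" for v i
  proof -
    have "(Mt *\<^sub>v v) $ i = (\<Sum>j\<in>{0..<n}. Mt $$ (i,j) * v $ j)"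
      using v i by (simp add: Mt_def scalar_prod_def)
    also have "\<dots> = (if i = 0 then v $ 0 else lap_apply (n,E) (\<lambda>j. if j < n then v $ j else 0) i)"
    proof (cases "i = 0")
      case True
      have "(\<Sum>j\<in>{0..<n}. Mt $$ (i,j) * v $ j) = (\<Sum>j\<in>{0..<n}. if j = 0 then v $ 0 else 0)"
        using True i by (intro sum.cong) (auto simp: Mt_def)
      then show ?thesis using True n_pos by simp
    next
      case False
      have nb: "nbrs (n,E) i = {j \<in> {0..<n}. adj (n,E) i j}" unfolding nbrs_def by auto
      have "(\<Sum>j\<in>{0..<n}. Mt $$ (i,j) * v $ j) =
          (\<Sum>j\<in>{0..<n}. (if i = j then real (deg (n,E) i) * v $ j else 0)) - (\<Sum>j\<in>{0..<n}. if adj (n,E) i j then v $ j else 0)"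
        unfolding sum_subtractf[symmetric] by (rule sum.cong) (use i in \<open>auto simp: Mt_def False algebra_simps\<close>)
      also have "\<dots> = real (deg (n,E) i) * v $ i - (\<Sum>j\<in>nbrs (n,E) i. v $ j)"
        unfolding nb sum.inter_filter[OF finite_atLeastLessThan] using i by simp
      also have "\<dots> = lap_apply (n,E) (\<lambda>j. if j < n then v $ j else 0) i"
        unfolding lap_apply_def using i by (auto intro!: sum.cong simp: nbrs_def)
      finally show ?thesis using False by simp
    qed
    finally show ?thesis .
  qed
  have lapsum0: "lap_apply (n,E) x 0 = - (\<Sum>i\<in>{..<n}-{0}. lap_apply (n,E) x i)" for x
    using lap_total[of x] sum.remove[of "{..<n}" 0 "lap_apply (n,E) x"] n_pos by simp
  have "det Mt \<noteq> 0"
  proof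
    assume "det Mt = 0"
    then obtain v where v: "v \<in> carrier_vec n" "v \<noteq> 0\<^sub>v n" "Mt *\<^sub>v v = 0\<^sub>v n"
      using det_0_iff_vec_prod_zero[OF Mc] by auto
    define x where "x = (\<lambda>j. if j < n then v $ j else 0)"
    have l1: "lap_apply (n,E) x i = 0" if "i < n" "i \<noteq> 0" for i
      using rowf[OF v(1) that(1)] v(3) that unfolding x_def by simp
    have "x 0 = 0" using rowf[OF v(1) n_pos] v(3) n_pos unfolding x_def by simp
    have l2: "lap_apply (n,E) x i = 0" if "i < n" for i
    proof (cases "i = 0")
      case True then show ?thesis using lapsum0[of x] l1 by simp
    qed (use l1 that in auto)
    have "x i = 0" if "i < n" for i
      using kernel[OF l2 that n_pos] \<open>x 0 = 0\<close> by simp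
    then have "v = 0\<^sub>v n" using v(1) unfolding x_def by (intro eq_vecI) auto
    then show False using v(2) by simp
  qed
  from det_non_zero_imp_unit[OF Mc this, where b = "()"]
  obtain B where B: "B \<in> carrier_mat n n" "Mt * B = 1\<^sub>m n"
    unfolding Units_def ring_mat_def by auto
  define rhs where "rhs = vec n (\<lambda>i. if i = 0 then 0 else f i)"
  define z where "z = B *\<^sub>v rhs"
  have rc: "rhs \<in> carrier_vec n" by (simp add: rhs_def)
  have zc: "z \<in> carrier_vec n" using B rc by (simp add: z_def)
  have Mz: "Mt *\<^sub>v z = rhs"
    unfolding z_def using assoc_mult_mat_vec[OF Mc B(1) rc] B(2) one_mult_mat_vec[OF rc] by simp
  define x where "x = (\<lambda>j. if j < n then z $ j else 0)"
  have l1: "lap_apply (n,E) x i = f i" if "i < n" "i \<noteq> 0" for i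
    using rowf[OF zc that(1)] Mz that unfolding x_def rhs_def by simp
  have "(\<Sum>i<n. f i) = f 0 + (\<Sum>i\<in>{..<n}-{0}. f i)"
    using sum.remove[of "{..<n}" 0 f] n_pos by simp
  then have "f 0 = - (\<Sum>i\<in>{..<n}-{0}. f i)" using f0 by simp
  also have "\<dots> = - (\<Sum>i\<in>{..<n}-{0}. lap_apply (n,E) x i)"
    using l1 by (auto intro!: sum.cong)
  finally have "lap_apply (n,E) x 0 = f 0" using lapsum0 by simp
  then have "\<forall>i<n. lap_apply (n,E) x i = f i" using l1 by (metis)
  then show ?thesis by blast
qed


lemma kf_green:
  fixes Z :: "nat \<Rightarrow> nat \<Rightarrow> real"
  assumes Z: "\<And>u i. u < n \<Longrightarrow> i < n \<Longrightarrow> lap_apply (n,E) (Z u) i = (if i = u then 1 else 0) - (if i = 0 then 1 else 0)"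
  shows "kf_star (n,E) = (\<Sum>a<n. real (deg (n,E) a)) * (\<Sum>a<n. real (deg (n,E) a) * Z a a)
     - (\<Sum>a<n. \<Sum>b<n. real (deg (n,E) a) * real (deg (n,E) b) * Z a b)"
proof -
  define d where "d = (\<lambda>a. real (deg (n,E) a))"
  have R: "resistance (n,E) a b = Z a a - Z b a - Z a b + Z b b" if "a < n" "b < n" for a b
  proof -
    have "resistance (n,E) a b = (Z a a - Z b a) - (Z a b - Z b b)"
      by (rule resistance_eq[OF that, of "\<lambda>i. Z a i - Z b i"]) (use that in \<open>simp add: lap_diff Z\<close>)
    then show ?thesis by simp
  qed
  define F where "F = (\<lambda>a b. d a * d b * (Z a a - Z b a - Z a b + Z b b))"
  have "kf_star (n,E) = (\<Sum>a<n. \<Sum>b\<in>{a<..<n}. F a b)"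
    unfolding kf_star_def fst_conv F_def d_def by (intro sum.cong refl) (simp add: R)
  also have "\<dots> = (\<Sum>a<n. \<Sum>b<n. F a b) / 2"
    by (rule tri_sum) (auto simp: F_def algebra_simps)
  also have "(\<Sum>a<n. \<Sum>b<n. F a b) = (\<Sum>a<n. \<Sum>b<n. d a * d b * Z a a) + (\<Sum>a<n. \<Sum>b<n. d a * d b * Z b b)
       - (\<Sum>a<n. \<Sum>b<n. d a * d b * Z b a) - (\<Sum>a<n. \<Sum>b<n. d a * d b * Z a b)"
    unfolding F_def sum_subtractf[symmetric] sum.distrib[symmetric] by (intro sum.cong refl) (simp add: algebra_simps)
  also have "(\<Sum>a<n. \<Sum>b<n. d a * d b * Z b b) = (\<Sum>a<n. \<Sum>b<n. d a * d b * Z a a)"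
    by (subst sum.swap) (simp add: mult_ac)
  also have "(\<Sum>a<n. \<Sum>b<n. d a * d b * Z b a) = (\<Sum>a<n. \<Sum>b<n. d a * d b * Z a b)"
    by (subst sum.swap) (simp add: mult_ac)
  also have "(\<Sum>a<n. \<Sum>b<n. d a * d b * Z a a) = (\<Sum>a<n. d a) * (\<Sum>a<n. d a * Z a a)"
    unfolding sum_product by (subst sum.swap) (simp add: mult_ac)
  finally show ?thesis unfolding d_def by simp
qed

end

lemma sum_shift: fixes n q :: nat and f :: "nat \<Rightarrow> 'a::comm_monoid_add" shows "(\<Sum>t<n+q. f t) = (\<Sum>t<n. f t) + (\<Sum>i<q. f (n + i))"
  by (induction q) (auto simp: add.assoc)

lemma sum_block: fixes m k :: nat and g :: "nat \<Rightarrow> 'a::comm_monoid_add" shows "(\<Sum>i<m*k. g i) = (\<Sum>j<m. \<Sum>c<k. g (j*k + c))"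
proof (induction m)
  case (Suc m)
  have "(\<Sum>i<Suc m * k. g i) = (\<Sum>i<m*k + k. g i)" by (simp add: add.commute)
  also have "\<dots> = (\<Sum>i<m*k. g i) + (\<Sum>c<k. g (m*k + c))" by (rule sum_shift)
  finally show ?case using Suc by simp
qed simp

locale subdiv = cgraph +
  fixes k :: nat
  assumes kpos: "0 < k"
begin

definition N where "N = n + k * m"
definition mid where "mid j c = n + j * k + c"
definition EH where "EH = {(ea j, mid j c) | j c. j < m \<and> c < k} \<union> {(eb j, mid j c) | j c. j < m \<and> c < k}"
definition jj where "jj t = (t - n) div k"

lemma par_eq: "par_subdiv k (n, E) = (N, EH)"
  unfolding par_subdiv_def Let_def N_def EH_def mid_def ea_def eb_def m_def es_def by simp

lemma mid_bounds: assumes "j < m" "c < k" shows "n \<le> mid j c" "mid j c < N"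
proof -
  have "j * k + c < (j + 1) * k" using assms by simp
  also have "\<dots> \<le> m * k" using assms by (intro mult_le_mono1) simp
  finally show "mid j c < N" unfolding mid_def N_def by (simp add: mult.commute)
  show "n \<le> mid j c" unfolding mid_def by simp
qed

lemma jj_mid: "c < k \<Longrightarrow> jj (mid j c) = j"
  unfolding jj_def mid_def by simp

lemma mid_inj: assumes "c < k" "c' < k" "mid j c = mid j' c'" shows "j = j'" "c = c'"
proof -
  show "j = j'" using jj_mid[OF assms(1), of j] jj_mid[OF assms(2), of j'] assms(3) by simp
  then show "c = c'" using assms(3) unfolding mid_def by simp
qed

lemma vert_cases:
  assumes "t < N" "\<not> t < n"
  obtains j c where "j < m" "c < k" "t = mid j c"
proof -
  define j where "j = (t - n) div k"
  define c where "c = (t - n) mod k"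
  have "t - n < m * k" using assms unfolding N_def by (simp add: mult.commute)
  then have "j < m" unfolding j_def by (simp add: less_mult_imp_div_less)
  moreover have "c < k" unfolding c_def using kpos by simp
  moreover have "t = mid j c" unfolding mid_def j_def c_def using assms(2)
    by (metis add_diff_inverse_nat div_mult_mod_eq group_cancel.add1)
  ultimately show ?thesis using that by blast
qed

lemma simpleH: "simple_graph (N, EH)"
  unfolding simple_graph_def EH_def using mid_bounds ea_lt_n eb_lt
  by (fastforce dest: order.strict_trans2)

lemma EH_fst: "(x, y) \<in> EH \<Longrightarrow> x < n \<and> n \<le> y"
  unfolding EH_def using mid_bounds ea_lt_n eb_lt by auto

lemma adjH_low: assumes "u < n"
  shows "adj (N, EH) u y \<longleftrightarrow> (\<exists>j c. j < m \<and> c < k \<and> y = mid j c \<and> (ea j = u \<or> eb j = u))"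
proof -
  have "(y, u) \<notin> EH" using EH_fst assms by fastforce
  then show ?thesis unfolding adj_def snd_conv EH_def by auto
qed

lemma adjH_mid: assumes "j < m" "c < k"
  shows "adj (N, EH) (mid j c) y \<longleftrightarrow> (y = ea j \<or> y = eb j)"
proof -
  have "(mid j c, y) \<notin> EH" using EH_fst mid_bounds[OF assms] by fastforce
  moreover have "(y, mid j c) \<in> EH \<longleftrightarrow> (y = ea j \<or> y = eb j)"
  proof
    assume "(y, mid j c) \<in> EH"
    then obtain j' c' where "j' < m" "c' < k" "mid j c = mid j' c'" "y = ea j' \<or> y = eb j'"
      unfolding EH_def by auto
    then show "y = ea j \<or> y = eb j" using mid_inj[OF assms(2)] by metis
  next
    assume "y = ea j \<or> y = eb j"
    then show "(y, mid j c) \<in> EH" unfolding EH_def using assms by auto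
  qed
  ultimately show ?thesis unfolding adj_def snd_conv by auto
qed

lemma nbrsH_low: assumes "u < n"
  shows "nbrs (N, EH) u = (\<lambda>(j, c). mid j c) ` (inc u \<times> {..<k})"
  unfolding nbrs_def fst_conv adjH_low[OF assms] inc_def using mid_bounds by auto

lemma nbrsH_mid: assumes "j < m" "c < k"
  shows "nbrs (N, EH) (mid j c) = {ea j, eb j}"
  unfolding nbrs_def fst_conv adjH_mid[OF assms] using assms ea_lt_n[OF assms(1)] eb_lt[OF assms(1)]
  by (auto simp: N_def)

lemma inj_mid: "inj_on (\<lambda>(j, c). mid j c) (A \<times> {..<k})"
  by (auto intro!: inj_onI dest: mid_inj)

lemma sumH_low: assumes "u < n"
  shows "(\<Sum>y\<in>nbrs (N, EH) u. g y) = (\<Sum>j\<in>inc u. \<Sum>c<k. g (mid j c))"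
  unfolding nbrsH_low[OF assms] sum.reindex[OF inj_mid]
  by (subst sum.cartesian_product) (simp add: case_prod_beta)

lemma sumH_mid: assumes "j < m" "c < k"
  shows "(\<Sum>y\<in>nbrs (N, EH) (mid j c). g y) = g (ea j) + g (eb j)"
  unfolding nbrsH_mid[OF assms] using ea_lt[OF assms(1)] by simp

lemma degH_low: assumes "u < n" shows "deg (N, EH) u = k * deg (n, E) u"
  unfolding deg_def nbrsH_low[OF assms] card_image[OF inj_mid] card_cartesian_product
  using card_inc unfolding deg_def by simp

lemma degH_mid: assumes "j < m" "c < k" shows "deg (N, EH) (mid j c) = 2"
  unfolding deg_def nbrsH_mid[OF assms] using ea_lt[OF assms(1)] by simp

lemma sum_split: "(\<Sum>t<N. f t) = (\<Sum>u<n. f u) + (\<Sum>j<m. \<Sum>c<k. f (mid j c))"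
  unfolding N_def sum_shift mult.commute[of k m] sum_block mid_def by (simp add: add.assoc)

lemma connH: "connected_graph (N, EH)"
proof -
  let ?R = "adj (N, EH)"
  have sym: "?R\<inverse>\<inverse> = ?R" by (auto simp: adj_def fun_eq_iff)
  have rev: "?R\<^sup>*\<^sup>* y x" if "?R\<^sup>*\<^sup>* x y" for x y
    using rtranclp_converseI[OF that] sym by simp
  have lift: "?R\<^sup>*\<^sup>* u v" if "(adj (n, E))\<^sup>*\<^sup>* u v" for u v
    using that
  proof (induction rule: rtranclp_induct)
    case (step y z)
    from step(2) obtain j where j: "j < m" "(ea j = y \<and> eb j = z) \<or> (ea j = z \<and> eb j = y)"
      unfolding adj_iff by auto
    have "?R y (mid j 0)" "?R (mid j 0) z"
      using j kpos adjH_mid[OF j(1) kpos] adj_lt[OF step(2)] adjH_low by (auto simp: adj_def)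
    then show ?case using step(3) by (meson rtranclp.rtrancl_into_rtrancl)
  qed simp
  have base: "\<exists>u<n. ?R\<^sup>*\<^sup>* t u" if tN: "t < N" for t
  proof (cases "t < n")
    case False
    obtain j c where jc: "j < m" "c < k" "t = mid j c" using vert_cases[OF tN False] by metis
    then have "?R t (ea j)" using adjH_mid by auto
    then show ?thesis using ea_lt_n[OF jc(1)] by blast
  qed auto
  have "?R\<^sup>*\<^sup>* a b" if ab: "a < N" "b < N" for a b
  proof -
    obtain u v where "u < n" "v < n" "?R\<^sup>*\<^sup>* a u" "?R\<^sup>*\<^sup>* b v" using base[OF ab(1)] base[OF ab(2)] by blast
    moreover have "?R\<^sup>*\<^sup>* u v" using lift reach \<open>u < n\<close> \<open>v < n\<close> by blast
    ultimately show ?thesis using rev by (meson rtranclp_trans)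
  qed
  moreover have "0 < N" using n_pos unfolding N_def by simp
  ultimately show ?thesis unfolding connected_graph_def by simp
qed

end

lemma alg_a: "(k::real) > 0 \<Longrightarrow> k / 2 * ((2 / k) * x) - 0 / 2 = x" by (simp add: field_simps)
lemma alg_b: "(k::real) > 0 \<Longrightarrow> k / 2 * ((1 / k) * (a - z) + (1 / k) * (b - z)) - (a + b) / 2 = - z"
  by (simp add: field_simps)
lemma sum_aux: "(\<Sum>j\<in>A. \<Sum>c<(k::nat). (P j :: real) / 2 - q j c / 2) =
   real k / 2 * (\<Sum>j\<in>A. P j) - (\<Sum>j\<in>A. \<Sum>c<k. q j c) / 2"
proof -
  have "(\<Sum>j\<in>A. \<Sum>c<k. P j / 2 - q j c / 2) = (\<Sum>j\<in>A. real k / 2 * P j - (\<Sum>c<k. q j c) / 2)"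
    by (intro sum.cong refl) (simp add: sum_subtractf sum_divide_distrib[symmetric])
  also have "\<dots> = real k / 2 * (\<Sum>j\<in>A. P j) - (\<Sum>j\<in>A. \<Sum>c<k. q j c) / 2"
    by (simp add: sum_subtractf sum_distrib_left sum_divide_distrib[symmetric])
  finally show ?thesis .
qed
lemma alg_c: "(a::real) + b = y + w \<Longrightarrow> y - (a + b + i) / 2 = (y - w) / 2 - i / 2"
  by (simp add: field_simps)

context subdiv begin

interpretation HC: cgraph N EH
  by (rule cgraph.intro[OF sgraph.intro[OF simpleH] cgraph_axioms.intro[OF connH]])

lemma green_G: obtains Z :: "nat \<Rightarrow> nat \<Rightarrow> real" where
  "\<And>u i. u < n \<Longrightarrow> i < n \<Longrightarrow> lap_apply (n,E) (Z u) i = (if i = u then 1 else 0) - (if i = 0 then 1 else 0)"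
proof -
  have "\<forall>u\<in>{..<n}. \<exists>z. \<forall>i<n. lap_apply (n,E) z i = (if i = u then 1 else 0) - (if i = 0 then 1 else 0)"
  proof
    fix u assume u: "u \<in> {..<n}"
    have "(\<Sum>i<n. (if i = u then 1 else 0) - (if i = 0 then 1 else (0::real))) = 0"
      using u n_pos by (simp add: sum_subtractf)
    then show "\<exists>z. \<forall>i<n. lap_apply (n,E) z i = (if i = u then 1 else 0) - (if i = 0 then 1 else 0)"
      by (rule exists_sol)
  qed
  from bchoice[OF this] obtain Z where "\<forall>u\<in>{..<n}. \<forall>i<n. lap_apply (n,E) (Z u) i = (if i = u then 1 else 0) - (if i = 0 then 1 else 0)"
    by blast
  then show ?thesis by (intro that[of Z]) auto
qed

lemma mid_ge: "n \<le> mid j c" unfolding mid_def by simp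

lemma one_step:
  "kf_star (N, EH) = 8 * real k * kf_star (n, E) + 2 * real k * real m
     - 4 * real k * real m * real n + 4 * real k ^ 2 * real m ^ 2"
proof -
  obtain Z where Z: "\<And>u i. u < n \<Longrightarrow> i < n \<Longrightarrow> lap_apply (n,E) (Z u) i = (if i = u then 1 else 0) - (if i = 0 then 1 else 0)"
    using green_G by blast
  have k0: "real k > 0" using kpos by simp
  define Y where "Y s v = (if s < n then (2 / real k) * Z s v + 0 * Z s v
       else (1 / real k) * Z (ea (jj s)) v + (1 / real k) * Z (eb (jj s)) v)" for s v
  define X where "X s t = (if t < n then Y s t else (Y s (ea (jj t)) + Y s (eb (jj t)) + (if s = t then 1 else 0)) / 2)" for s t
  have X_low: "t < n \<Longrightarrow> X s t = Y s t" for s t unfolding X_def by simp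
  have X_mid: "c < k \<Longrightarrow> X s (mid j c) = (Y s (ea j) + Y s (eb j) + (if s = mid j c then 1 else 0)) / 2" for s j c
    unfolding X_def using mid_ge[of j c] jj_mid by simp
  have Y_low: "s < n \<Longrightarrow> Y s v = (2 / real k) * Z s v" for s v unfolding Y_def by simp
  have Y_mid: "c < k \<Longrightarrow> Y (mid j c) v = (1 / real k) * Z (ea j) v + (1 / real k) * Z (eb j) v" for j c v
    unfolding Y_def using mid_ge[of j c] jj_mid by simp
  have lapY_low: "lap_apply (n,E) (Y s) v = (2 / real k) * ((if v = s then 1 else 0) - (if v = 0 then 1 else 0))"
    if "s < n" "v < n" for s v
  proof -
    have "Y s = (\<lambda>i. (2 / real k) * Z s i + 0 * Z s i)" unfolding Y_def using that by auto
    then have "lap_apply (n,E) (Y s) v = (2 / real k) * lap_apply (n,E) (Z s) v + 0 * lap_apply (n,E) (Z s) v"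
      by (simp only: lap_lin)
    then show ?thesis using Z that by simp
  qed
  have lapY_mid: "lap_apply (n,E) (Y (mid j c)) v = (1 / real k) * ((if v = ea j then 1 else 0) - (if v = 0 then 1 else 0))
      + (1 / real k) * ((if v = eb j then 1 else 0) - (if v = 0 then 1 else 0))"
    if "j < m" "c < k" "v < n" for j c v
  proof -
    have "Y (mid j c) = (\<lambda>i. (1 / real k) * Z (ea j) i + (1 / real k) * Z (eb j) i)"
      using Y_mid that by auto
    then have "lap_apply (n,E) (Y (mid j c)) v = (1 / real k) * lap_apply (n,E) (Z (ea j)) v + (1 / real k) * lap_apply (n,E) (Z (eb j)) v"
      by (simp only: lap_lin)
    then show ?thesis using Z that ea_lt_n eb_lt by simp
  qed
  have cnt: "(\<Sum>j\<in>inc t. \<Sum>c<k. (if s = mid j c then 1 else 0 :: real)) =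
      (if s < n then 0 else (if jj s \<in> inc t then 1 else 0))" if sN: "s < N" for s t
  proof (cases "s < n")
    case True
    have "s \<noteq> mid j c" for j c using mid_ge[of j c] True by auto
    then show ?thesis using True by simp
  next
    case False
    obtain j0 c0 where jc: "j0 < m" "c0 < k" "s = mid j0 c0" using vert_cases[OF sN False] by metis
    have "\<And>j. (\<Sum>c<k. (if s = mid j c then 1 else 0 :: real)) = (if j = j0 then 1 else 0)"
    proof -
      fix j
      have "(\<Sum>c<k. (if s = mid j c then 1 else 0 :: real)) = (\<Sum>c<k. (if j = j0 \<and> c = c0 then 1 else 0))"
      proof (intro sum.cong refl)
        fix c assume c: "c \<in> {..<k}"
        have "s = mid j c \<longleftrightarrow> j = j0 \<and> c = c0"
          using mid_inj[OF jc(2), where c'=c and j=j0 and j'=j] c jc(3) by auto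
        then show "(if s = mid j c then 1 else 0 :: real) = (if j = j0 \<and> c = c0 then 1 else 0)" by simp
      qed
      also have "\<dots> = (if j = j0 then 1 else 0)" using jc(2) by (cases "j = j0") simp_all
      finally show "(\<Sum>c<k. (if s = mid j c then 1 else 0 :: real)) = (if j = j0 then 1 else 0)" .
    qed
    then have "(\<Sum>j\<in>inc t. \<Sum>c<k. (if s = mid j c then 1 else 0 :: real)) = (\<Sum>j\<in>inc t. if j = j0 then 1 else 0)"
      by simp
    also have "\<dots> = (if j0 \<in> inc t then 1 else 0)" using fin_inc by (simp add: sum.delta')
    finally show ?thesis using False jc jj_mid by simp
  qed
  have XH: "lap_apply (N, EH) (X s) t = (if t = s then 1 else 0) - (if t = 0 then 1 else 0)"
    if sN: "s < N" and tN: "t < N" for s t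
  proof (cases "t < n")
    case False
    obtain j c where jc: "j < m" "c < k" "t = mid j c" using vert_cases[OF tN False] by metis
    have "lap_apply (N, EH) (X s) t = (X s t - X s (ea j)) + (X s t - X s (eb j))"
      unfolding HC.lap_sum jc(3) sumH_mid[OF jc(1,2)] by simp
    also have "\<dots> = (if s = t then 1 else 0)"
      unfolding jc(3) X_mid[OF jc(2)] X_low[OF ea_lt_n[OF jc(1)]] X_low[OF eb_lt[OF jc(1)]] by simp
    finally show ?thesis using False n_pos by auto
  next
    case True
    have "lap_apply (N, EH) (X s) t = (\<Sum>j\<in>inc t. \<Sum>c<k. X s t - X s (mid j c))"
      unfolding HC.lap_sum sumH_low[OF True] by simp
    also have "\<dots> = (\<Sum>j\<in>inc t. \<Sum>c<k. (Y s t - Y s (oth t j)) / 2 - (if s = mid j c then 1 else 0) / 2)"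
    proof (intro sum.cong refl)
      fix j c assume j: "j \<in> inc t" and c: "c \<in> {..<k}"
      have hy: "Y s (ea j) + Y s (eb j) = Y s t + Y s (oth t j)" using j unfolding inc_def oth_def by auto
      have ck: "c < k" using c by simp
      show "X s t - X s (mid j c) = (Y s t - Y s (oth t j)) / 2 - (if s = mid j c then 1 else 0) / 2"
        unfolding X_low[OF True] X_mid[OF ck] by (rule alg_c[OF hy])
    qed
    also have "\<dots> = real k / 2 * (\<Sum>j\<in>inc t. Y s t - Y s (oth t j)) - (\<Sum>j\<in>inc t. \<Sum>c<k. (if s = mid j c then 1 else 0 :: real)) / 2"
      by (rule sum_aux)
    also have "(\<Sum>j\<in>inc t. Y s t - Y s (oth t j)) = lap_apply (n,E) (Y s) t"
      unfolding lap_sum nbr_sum by simp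
    finally have eq: "lap_apply (N, EH) (X s) t = real k / 2 * lap_apply (n,E) (Y s) t
       - (if s < n then 0 else (if jj s \<in> inc t then 1 else 0)) / 2" using cnt[OF sN] by simp
    show ?thesis
    proof (cases "s < n")
      case True
      then show ?thesis unfolding eq lapY_low[OF True \<open>t < n\<close>] using alg_a[OF k0] by simp
    next
      case False
      obtain j0 c0 where jc: "j0 < m" "c0 < k" "s = mid j0 c0" using vert_cases[OF sN False] by metis
      have ab: "ea j0 < eb j0" using ea_lt[OF jc(1)] .
      have "t \<noteq> s" using True False by auto
      moreover have "(if j0 \<in> inc t then 1 else 0 :: real) = (if t = ea j0 then 1 else 0) + (if t = eb j0 then 1 else 0)"
        using ab jc(1) unfolding inc_def by auto
      ultimately show ?thesis unfolding eq using lapY_mid[OF jc(1,2) \<open>t < n\<close>] jc False jj_mid[OF jc(2)] alg_b[OF k0]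
        by simp
    qed
  qed
  define d where "d u = real (deg (n,E) u)" for u
  define d' where "d' t = real (deg (N,EH) t)" for t
  define D where "D = (\<Sum>u<n. d u * Z u u)"
  define A where "A = (\<Sum>u<n. \<Sum>v\<in>nbrs (n,E) u. Z u v)"
  define SZ where "SZ u = (\<Sum>v<n. d v * Z u v)" for u
  define T where "T = (\<Sum>u<n. d u * SZ u)"
  have dH_low: "u < n \<Longrightarrow> d' u = real k * d u" for u unfolding d_def d'_def using degH_low by simp
  have dH_mid: "j < m \<Longrightarrow> c < k \<Longrightarrow> d' (mid j c) = 2" for j c unfolding d'_def using degH_mid by simp
  have hs: "(\<Sum>u<n. d u) = 2 * real m" unfolding d_def by (rule handshake)
  have kfH: "kf_star (N,EH) = (\<Sum>t<N. d' t) * (\<Sum>t<N. d' t * X t t) - (\<Sum>s<N. \<Sum>t<N. d' s * d' t * X s t)"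
    unfolding d'_def by (rule HC.kf_green[of X, OF XH])
  have T2: "(\<Sum>a<n. \<Sum>b<n. d a * d b * Z a b) = T"
    unfolding T_def SZ_def by (simp add: sum_distrib_left mult_ac)
  have kfG: "kf_star (n,E) = 2 * real m * D - T"
    using kf_green[of Z, OF Z] unfolding d_def[symmetric] D_def[symmetric] hs T2 .
  have E1: "(\<Sum>j<m. Z (ea j) (ea j) + Z (eb j) (eb j)) = D"
    using edge_sum[of "\<lambda>u v. Z u u"] unfolding D_def d_def deg_sum by (simp add: mult_ac)
  have E2: "(\<Sum>j<m. Z (ea j) (eb j) + Z (eb j) (ea j)) = A"
    using edge_sum[of Z] unfolding A_def by simp
  have E3: "(\<Sum>j<m. f (ea j) + f (eb j)) = (\<Sum>u<n. d u * f u)" for f :: "nat \<Rightarrow> real"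
    using edge_sum[of "\<lambda>u v. f u"] unfolding d_def deg_sum by (simp add: mult_ac)
  have S1: "(\<Sum>t<N. d' t) = 4 * real k * real m"
  proof -
    have "(\<Sum>t<N. d' t) = (\<Sum>u<n. real k * d u) + (\<Sum>j<m. \<Sum>c<k. 2)"
      unfolding sum_split using dH_low dH_mid by simp
    also have "\<dots> = 4 * real k * real m" using hs by (simp add: sum_distrib_left[symmetric])
    finally show ?thesis .
  qed
  have S2: "(\<Sum>t<N. d' t * X t t) = 3 * D + A + real k * real m"
  proof -
    have p1: "(\<Sum>u<n. d' u * X u u) = 2 * D"
      unfolding D_def sum_distrib_left
      by (intro sum.cong refl) (use k0 dH_low X_low Y_low in simp)
    have p2: "(\<Sum>j<m. \<Sum>c<k. d' (mid j c) * X (mid j c) (mid j c)) =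
        (\<Sum>j<m. (Z (ea j) (ea j) + Z (eb j) (eb j)) + (Z (ea j) (eb j) + Z (eb j) (ea j)) + real k)"
    proof (intro sum.cong refl)
      fix j assume j: "j \<in> {..<m}"
      have "(\<Sum>c<k. d' (mid j c) * X (mid j c) (mid j c)) =
          (\<Sum>c<k. (1 / real k) * (Z (ea j) (ea j) + Z (eb j) (ea j)) + (1 / real k) * (Z (ea j) (eb j) + Z (eb j) (eb j)) + 1)"
        by (intro sum.cong refl) (use j dH_mid X_mid Y_mid in \<open>simp add: algebra_simps\<close>)
      also have "\<dots> = (Z (ea j) (ea j) + Z (eb j) (eb j)) + (Z (ea j) (eb j) + Z (eb j) (ea j)) + real k"
        using k0 by (simp add: field_simps)
      finally show "(\<Sum>c<k. d' (mid j c) * X (mid j c) (mid j c)) =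
          (Z (ea j) (ea j) + Z (eb j) (eb j)) + (Z (ea j) (eb j) + Z (eb j) (ea j)) + real k" .
    qed
    show ?thesis unfolding sum_split p1 p2 E1[symmetric] E2[symmetric] by (simp add: sum.distrib)
  qed
  have SY_low: "s < n \<Longrightarrow> (\<Sum>u<n. d u * Y s u) = (2 / real k) * SZ s" for s
    unfolding SZ_def sum_distrib_left using Y_low by (simp add: mult_ac)
  have SY_mid: "c < k \<Longrightarrow> (\<Sum>u<n. d u * Y (mid j c) u) = (1 / real k) * SZ (ea j) + (1 / real k) * SZ (eb j)" for j c
    unfolding SZ_def sum_distrib_left sum.distrib[symmetric] using Y_mid by (simp add: algebra_simps)
  have ind: "(\<Sum>j<m. \<Sum>c<k. (if s = mid j c then 1 else 0 :: real)) = (if s < n then 0 else 1)" if sN: "s < N" for s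
  proof -
    have "(\<Sum>t<N. (if s = t then 1 else 0 :: real)) = 1" using sN by (simp add: sum.delta)
    moreover have "(\<Sum>u<n. (if s = u then 1 else 0 :: real)) = (if s < n then 1 else 0)" by (simp add: sum.delta)
    ultimately show ?thesis using sum_split[of "\<lambda>t. if s = t then 1 else 0 :: real"] by (cases "s < n") simp_all
  qed
  have I: "(\<Sum>t<N. d' t * X s t) = 2 * real k * (\<Sum>u<n. d u * Y s u) + (if s < n then 0 else 1)"
    if sN: "s < N" for s
  proof -
    have q1: "(\<Sum>u<n. d' u * X s u) = real k * (\<Sum>u<n. d u * Y s u)"
      unfolding sum_distrib_left by (intro sum.cong refl) (use dH_low X_low in simp)
    have q2: "(\<Sum>j<m. \<Sum>c<k. d' (mid j c) * X s (mid j c)) =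
        (\<Sum>j<m. real k * (Y s (ea j) + Y s (eb j))) + (\<Sum>j<m. \<Sum>c<k. (if s = mid j c then 1 else 0 :: real))"
      unfolding sum.distrib[symmetric]
    proof (intro sum.cong refl)
      fix j assume j: "j \<in> {..<m}"
      have "(\<Sum>c<k. d' (mid j c) * X s (mid j c)) = (\<Sum>c<k. (Y s (ea j) + Y s (eb j)) + (if s = mid j c then 1 else 0))"
      proof (intro sum.cong refl)
        fix c assume "c \<in> {..<k}"
        then have ck: "c < k" by simp
        have jm: "j < m" using j by simp
        show "d' (mid j c) * X s (mid j c) = (Y s (ea j) + Y s (eb j)) + (if s = mid j c then 1 else 0)"
          unfolding dH_mid[OF jm ck] X_mid[OF ck] by simp
      qed
      then show "(\<Sum>c<k. d' (mid j c) * X s (mid j c)) = real k * (Y s (ea j) + Y s (eb j)) + (\<Sum>c<k. (if s = mid j c then 1 else 0 :: real))"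
        by (simp add: sum.distrib)
    qed
    show ?thesis unfolding sum_split q1 q2 ind[OF sN] sum_distrib_left[symmetric] E3 by simp
  qed
  have E4: "(\<Sum>j<m. SZ (ea j) + SZ (eb j)) = T" unfolding T_def by (rule E3)
  have S3: "(\<Sum>s<N. \<Sum>t<N. d' s * d' t * X s t) = 8 * real k * T + 2 * real k * real m"
  proof -
    have "(\<Sum>s<N. \<Sum>t<N. d' s * d' t * X s t) = (\<Sum>s<N. d' s * (2 * real k * (\<Sum>u<n. d u * Y s u) + (if s < n then 0 else 1)))"
    proof (intro sum.cong refl)
      fix s assume "s \<in> {..<N}"
      then have sN: "s < N" by simp
      have "(\<Sum>t<N. d' s * d' t * X s t) = d' s * (\<Sum>t<N. d' t * X s t)"
        by (simp add: sum_distrib_left mult_ac)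
      then show "(\<Sum>t<N. d' s * d' t * X s t) = d' s * (2 * real k * (\<Sum>u<n. d u * Y s u) + (if s < n then 0 else 1))"
        unfolding I[OF sN] .
    qed
    also have "\<dots> = (\<Sum>u<n. 4 * real k * (d u * SZ u)) + (\<Sum>j<m. 4 * real k * (SZ (ea j) + SZ (eb j)) + 2 * real k)"
      unfolding sum_split
    proof (intro arg_cong2[where f = "(+)"] sum.cong refl)
      fix u assume "u \<in> {..<n}"
      then show "d' u * (2 * real k * (\<Sum>v<n. d v * Y u v) + (if u < n then 0 else 1)) = 4 * real k * (d u * SZ u)"
        using dH_low SY_low k0 by simp
    next
      fix j assume j: "j \<in> {..<m}"
      have "(\<Sum>c<k. d' (mid j c) * (2 * real k * (\<Sum>u<n. d u * Y (mid j c) u) + (if mid j c < n then 0 else 1)))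
          = (\<Sum>c<k. 4 * (SZ (ea j) + SZ (eb j)) + 2)"
      proof (intro sum.cong refl)
        fix c assume "c \<in> {..<k}"
        then have ck: "c < k" by simp
        have jm: "j < m" using j by simp
        have nl: "\<not> mid j c < n" using mid_ge[of j c] by simp
        show "d' (mid j c) * (2 * real k * (\<Sum>u<n. d u * Y (mid j c) u) + (if mid j c < n then 0 else 1)) = 4 * (SZ (ea j) + SZ (eb j)) + 2"
          unfolding dH_mid[OF jm ck] SY_mid[OF ck] using nl k0 by (simp add: field_simps)
      qed
      then show "(\<Sum>c<k. d' (mid j c) * (2 * real k * (\<Sum>u<n. d u * Y (mid j c) u) + (if mid j c < n then 0 else 1)))
          = 4 * real k * (SZ (ea j) + SZ (eb j)) + 2 * real k"
        by (simp add: algebra_simps)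
    qed
    also have "\<dots> = 8 * real k * T + 2 * real k * real m"
    proof -
      have E4': "(\<Sum>j<m. SZ (ea j)) + (\<Sum>j<m. SZ (eb j)) = T" using E4 by (simp add: sum.distrib)
      have "(\<Sum>u<n. 4 * real k * (d u * SZ u)) = 4 * real k * T" unfolding T_def by (simp add: sum_distrib_left)
      moreover have "(\<Sum>j<m. 4 * real k * (SZ (ea j) + SZ (eb j)) + 2 * real k) = 4 * real k * T + 2 * real k * real m"
        unfolding E4'[symmetric] by (simp add: sum.distrib sum_distrib_left[symmetric] algebra_simps)
      ultimately show ?thesis by simp
    qed
    finally show ?thesis .
  qed
  have DA: "A = D - real n + 1"
  proof -
    have "D - A = (\<Sum>u<n. lap_apply (n,E) (Z u) u)"
      unfolding D_def A_def sum_subtractf[symmetric] lap_apply_def d_def by simp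
    also have "\<dots> = (\<Sum>u<n. 1 - (if u = 0 then 1 else 0))" using Z by simp
    also have "\<dots> = real n - 1" using n_pos by (simp add: sum_subtractf)
    finally show ?thesis by simp
  qed
  show ?thesis unfolding kfH S1 S2 S3 kfG DA by (simp add: power2_eq_square algebra_simps)
qed

end

context subdiv begin
lemma edgesH: "card EH = 2 * k * m"
proof -
  interpret HC: cgraph N EH
    by (rule cgraph.intro[OF sgraph.intro[OF simpleH] cgraph_axioms.intro[OF connH]])
  have "(\<Sum>t<N. real (deg (N,EH) t)) = (\<Sum>u<n. real k * real (deg (n,E) u)) + (\<Sum>j<m. \<Sum>c<k. 2)"
    unfolding sum_split using degH_low degH_mid by simp
  also have "\<dots> = 4 * real k * real m" using handshake by (simp add: sum_distrib_left[symmetric])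
  finally have "2 * real HC.m = 4 * real k * real m" using HC.handshake by simp
  then have "HC.m = 2 * k * m" by (simp del: of_nat_mult add: of_nat_mult[symmetric])
  then show ?thesis using HC.m_card by simp
qed
end

lemma step_all:
  assumes "simple_graph G" "connected_graph G" "0 < k"
  shows "simple_graph (par_subdiv k G) \<and> connected_graph (par_subdiv k G)
    \<and> fst (par_subdiv k G) = fst G + k * num_edges G
    \<and> num_edges (par_subdiv k G) = 2 * k * num_edges G
    \<and> kf_star (par_subdiv k G) = 8 * real k * kf_star G + 2 * real k * real (num_edges G)
       - 4 * real k * real (num_edges G) * real (fst G) + 4 * real k ^ 2 * real (num_edges G) ^ 2"
proof -
  obtain n E where G: "G = (n, E)" by fastforce
  interpret subdiv n E k
    using assms unfolding G
    by (intro subdiv.intro cgraph.intro sgraph.intro cgraph_axioms.intro subdiv_axioms.intro)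
  have me: "num_edges G = m" unfolding G num_edges_def m_card by simp
  show ?thesis unfolding G par_eq using simpleH connH one_step edgesH me G
    by (simp add: N_def num_edges_def)
qed

lemma split_frac: "(a::real) * (b + c) / d * e = a * b / d * e + a * c / d * e"
  by (simp add: distrib_left add_divide_distrib distrib_right)

lemma alg_main:
  fixes k K n m x y :: real
  assumes k: "k > 2"
  shows "(2*y)^3 * (k*x) * K + (2*y) * (k*x) * ((2*y)^2 - 1) / 3 * (m - 2 * m * n)
      + k * (2*y)^2 * (k*x) * ((k*x) - (2*y)) / (k - 2) * m^2
      - k * (2*y) * (k*x) * ((2*y)^2 - 2 * k * ((2*y)^2 - 1) + 3 * ((2*y) * (k*x)) - 4) / (3 * (k - 2) * (2 * k - 1)) * m^2
    = 8 * k * (y^3 * x * K + y * x * (y^2 - 1) / 3 * (m - 2 * m * n)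
      + k * y^2 * x * (x - y) / (k - 2) * m^2
      - k * y * x * (y^2 - 2 * k * (y^2 - 1) + 3 * (y * x) - 4) / (3 * (k - 2) * (2 * k - 1)) * m^2)
      + 2 * k * (y * x * m) - 4 * k * (y * x * m) * (n + k * m * (y * x - 1) / (2 * k - 1))
      + 4 * k^2 * (y * x * m)^2"
proof -
  have a: "k - 2 \<noteq> 0" "2 * k - 1 \<noteq> 0" using k by auto
  have P0: "(2*y)^3 * (k*x) * K = 8 * k * (y^3 * x * K)" by (simp add: power3_eq_cube)
  have P1: "(2*y) * (k*x) * ((2*y)^2 - 1) / 3 * (m - 2 * m * n) =
      8 * k * (y * x * (y^2 - 1) / 3 * (m - 2 * m * n)) + (2 * k * (y * x * m) - 4 * k * (y * x * m) * n)"
    by (simp add: field_simps power2_eq_square)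
  have P2: "k * (2*y)^2 * (k*x) * ((k*x) - (2*y)) / (k - 2) * m^2 =
      8 * k * (k * y^2 * x * (x - y) / (k - 2) * m^2) + 4 * k^2 * (y * x * m)^2"
  proof -
    have eq: "(k*x) - (2*y) = 2 * (x - y) + (k - 2) * x" by (simp add: algebra_simps)
    have "k * (2*y)^2 * (k*x) * ((k*x) - (2*y)) / (k - 2) * m^2 =
        k * (2*y)^2 * (k*x) * (2 * (x - y)) / (k - 2) * m^2 + k * (2*y)^2 * (k*x) * ((k - 2) * x) / (k - 2) * m^2"
      unfolding eq by (rule split_frac)
    also have "k * (2*y)^2 * (k*x) * ((k - 2) * x) / (k - 2) * m^2 = 4 * k^2 * (y * x * m)^2"
      using a by (simp add: power2_eq_square)
    also have "k * (2*y)^2 * (k*x) * (2 * (x - y)) / (k - 2) * m^2 = 8 * k * (k * y^2 * x * (x - y) / (k - 2) * m^2)"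
      by (simp add: power2_eq_square)
    finally show ?thesis by simp
  qed
  have P3: "k * (2*y) * (k*x) * ((2*y)^2 - 2 * k * ((2*y)^2 - 1) + 3 * ((2*y) * (k*x)) - 4) / (3 * (k - 2) * (2 * k - 1)) * m^2
     = 8 * k * (k * y * x * (y^2 - 2 * k * (y^2 - 1) + 3 * (y * x) - 4) / (3 * (k - 2) * (2 * k - 1)) * m^2)
       + 4 * k^2 * (y * x) * m^2 * (y * x - 1) / (2 * k - 1)"
  proof -
    have eq: "(2*y)^2 - 2 * k * ((2*y)^2 - 1) + 3 * ((2*y) * (k*x)) - 4 =
        4 * (y^2 - 2 * k * (y^2 - 1) + 3 * (y * x) - 4) + 6 * (k - 2) * (y * x - 1)"
      by (simp add: algebra_simps power2_eq_square)
    have "k * (2*y) * (k*x) * ((2*y)^2 - 2 * k * ((2*y)^2 - 1) + 3 * ((2*y) * (k*x)) - 4) / (3 * (k - 2) * (2 * k - 1)) * m^2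
      = k * (2*y) * (k*x) * (4 * (y^2 - 2 * k * (y^2 - 1) + 3 * (y * x) - 4)) / (3 * (k - 2) * (2 * k - 1)) * m^2
        + k * (2*y) * (k*x) * (6 * (k - 2) * (y * x - 1)) / (3 * (k - 2) * (2 * k - 1)) * m^2"
      unfolding eq by (rule split_frac)
    also have "k * (2*y) * (k*x) * (6 * (k - 2) * (y * x - 1)) / (3 * (k - 2) * (2 * k - 1)) * m^2
        = 4 * k^2 * (y * x) * m^2 * (y * x - 1) / (2 * k - 1)"
    proof -
      have n1: "k * (2*y) * (k*x) * (6 * (k - 2) * (y * x - 1)) = (4 * k^2 * (y * x) * (y * x - 1)) * (3 * (k - 2))"
        by (simp add: algebra_simps power2_eq_square)
      have n2: "3 * (k - 2) * (2 * k - 1) = (2 * k - 1) * (3 * (k - 2))" by simp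
      have n3: "3 * (k - 2) \<noteq> 0" using a by simp
      show ?thesis unfolding n1 n2 nonzero_mult_divide_mult_cancel_right[OF n3] by simp
    qed
    also have "k * (2*y) * (k*x) * (4 * (y^2 - 2 * k * (y^2 - 1) + 3 * (y * x) - 4)) / (3 * (k - 2) * (2 * k - 1)) * m^2
        = 8 * k * (k * y * x * (y^2 - 2 * k * (y^2 - 1) + 3 * (y * x) - 4) / (3 * (k - 2) * (2 * k - 1)) * m^2)"
      by (simp add: power2_eq_square)
    finally show ?thesis by simp
  qed
  have P4: "4 * k * (y * x * m) * (n + k * m * (y * x - 1) / (2 * k - 1)) =
      4 * k * (y * x * m) * n + 4 * k^2 * (y * x) * m^2 * (y * x - 1) / (2 * k - 1)"
    by (simp add: algebra_simps power2_eq_square add_divide_distrib)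
  show ?thesis unfolding P0 P1 P2 P3 P4 by (simp add: algebra_simps)
qed

theorem theorem4p6:
  fixes G :: graph and k r :: nat
  assumes "simple_graph G" and "connected_graph G" and "k > 2" and "r \<ge> 1"
  shows "kf_star ((par_subdiv k ^^ r) G) =
      (8 * real k) ^ r * kf_star G
    + (2 * real k) ^ r * (4 ^ r - 1) / 3
        * (real (num_edges G) - 2 * real (num_edges G) * real (fst G))
    + real k * (4 * real k) ^ r * (real k ^ r - 2 ^ r) / (real k - 2) * real (num_edges G) ^ 2
    - real k * (2 * real k) ^ r * (4 ^ r - 2 * real k * (4 ^ r - 1) + 3 * (2 * real k) ^ r - 4)
        / (3 * (real k - 2) * (2 * real k - 1)) * real (num_edges G) ^ 2"
proof -
  define F where "F r = (8 * real k) ^ r * kf_star G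
    + (2 * real k) ^ r * (4 ^ r - 1) / 3
        * (real (num_edges G) - 2 * real (num_edges G) * real (fst G))
    + real k * (4 * real k) ^ r * (real k ^ r - 2 ^ r) / (real k - 2) * real (num_edges G) ^ 2
    - real k * (2 * real k) ^ r * (4 ^ r - 2 * real k * (4 ^ r - 1) + 3 * (2 * real k) ^ r - 4)
        / (3 * (real k - 2) * (2 * real k - 1)) * real (num_edges G) ^ 2" for r
  define \<Phi> where "\<Phi> x y = y^3 * x * kf_star G + y * x * (y^2 - 1) / 3 * (real (num_edges G) - 2 * real (num_edges G) * real (fst G))
      + real k * y^2 * x * (x - y) / (real k - 2) * real (num_edges G)^2
      - real k * y * x * (y^2 - 2 * real k * (y^2 - 1) + 3 * (y * x) - 4) / (3 * (real k - 2) * (2 * real k - 1)) * real (num_edges G)^2"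
    for x y :: real
  have kpos: "0 < k" using assms by simp
  have k2: "real k > 2" using assms by simp
  have c1: "(8 * real k) ^ r = (2 ^ r) ^ 3 * real k ^ r" for r
  proof -
    have "(8::real) ^ r = (2 ^ r) ^ 3" by (simp add: power_mult[symmetric] mult.commute[of r] power_mult)
    then show ?thesis by (simp add: power_mult_distrib)
  qed
  have c3: "(4::real) ^ r = (2 ^ r) ^ 2" for r
    by (simp add: power_mult[symmetric] mult.commute[of r] power_mult)
  have c4: "(4 * real k) ^ r = (2 ^ r) ^ 2 * real k ^ r" for r using c3 by (simp add: power_mult_distrib)
  have c2: "(2 * real k) ^ r = 2 ^ r * real k ^ r" for r by (simp add: power_mult_distrib)
  have FP: "F r = \<Phi> (real k ^ r) (2 ^ r)" for r
    unfolding F_def \<Phi>_def c1 c2 c3 c4 by (simp add: mult.assoc)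
  have P: "simple_graph ((par_subdiv k ^^ r) G) \<and> connected_graph ((par_subdiv k ^^ r) G)
     \<and> real (fst ((par_subdiv k ^^ r) G)) = real (fst G) + real k * real (num_edges G) * ((2 * real k) ^ r - 1) / (2 * real k - 1)
     \<and> real (num_edges ((par_subdiv k ^^ r) G)) = (2 * real k) ^ r * real (num_edges G)
     \<and> kf_star ((par_subdiv k ^^ r) G) = F r" for r
  proof (induction r)
    case 0
    have "F 0 = kf_star G" unfolding F_def by simp
    then show ?case using assms by simp
  next
    case (Suc r)
    define H where "H = (par_subdiv k ^^ r) G"
    have IH: "simple_graph H" "connected_graph H"
      "real (fst H) = real (fst G) + real k * real (num_edges G) * ((2 * real k) ^ r - 1) / (2 * real k - 1)"
      "real (num_edges H) = (2 * real k) ^ r * real (num_edges G)" "kf_star H = F r"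
      using Suc.IH unfolding H_def by auto
    have S: "(par_subdiv k ^^ Suc r) G = par_subdiv k H" unfolding H_def by simp
    note st = step_all[OF IH(1) IH(2) kpos]
    have d: "2 * real k - 1 \<noteq> 0" using k2 by simp
    have fst_eq: "real (fst (par_subdiv k H)) = real (fst G) + real k * real (num_edges G) * ((2 * real k) ^ Suc r - 1) / (2 * real k - 1)"
    proof -
      have "real (fst (par_subdiv k H)) = real (fst H) + real k * real (num_edges H)" using st by simp
      also have "\<dots> = real (fst G) + real k * real (num_edges G) * ((2 * real k) ^ Suc r - 1) / (2 * real k - 1)"
        unfolding IH(3) IH(4) using d by (simp add: field_simps)
      finally show ?thesis .
    qed
    have ne_eq: "real (num_edges (par_subdiv k H)) = (2 * real k) ^ Suc r * real (num_edges G)"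
      using st IH(4) by simp
    have "kf_star (par_subdiv k H) = 8 * real k * F r + 2 * real k * real (num_edges H)
       - 4 * real k * real (num_edges H) * real (fst H) + 4 * real k ^ 2 * real (num_edges H) ^ 2"
      using st IH(5) by simp
    also have "\<dots> = \<Phi> (real k * real k ^ r) (2 * 2 ^ r)"
      unfolding FP IH(3) IH(4) c2 \<Phi>_def by (rule alg_main[OF k2, symmetric])
    also have "\<dots> = F (Suc r)" unfolding FP by simp
    finally show ?case using S st fst_eq ne_eq by simp
  qed
  then show ?thesis unfolding F_def by blast
qed

end
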